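(* Consider the one-dimensional Dirac equation described in the context, with exact solution $\varPhi$ on $[0,T]\times[a,b]$, and suppose assumptions (A) and (B) of the context hold. Then there exist constants $h_0>0$, $\tau_0>0$, independent of $\varepsilon$ and sufficiently small, such that for every $0<\varepsilon\le1$, $0<h\le h_0$ and $0<\tau\le\tau_0$, the solution $\varPhi^n$ of the CNFD scheme described in the context satisfies $$\|\mathbf{e}^n\|_{l^2}\lesssim\frac{h^2}{\varepsilon}+\frac{\tau^2}{\varepsilon^3},\qquad 0\le n\le \frac{T}{\tau},$$ where $\mathbf{e}^n_j=\varPhi(t_n,x_j)-\varPhi^n_j$ and $\|\mathbf{e}^n\|_{l^2}^2=h\sum_{j=0}^{M-1}|\mathbf{e}^n_j|^2$, and $p\lesssim q$ means $|p|\le Cq$ with $C>0$ independent of $\varepsilon,\tau,h,n$.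
   Context: Pauli matrices: $\sigma_1=\begin{pmatrix}0&1\\1&0\end{pmatrix}$, $\sigma_3=\begin{pmatrix}1&0\\0&-1\end{pmatrix}$; $I_2$ the $2\times2$ identity. Let $\Omega=(a,b)$, $0<\varepsilon\le1$, and $V,A_1$ real-valued. The equation is, for $\varPhi=(\phi_1,\phi_2)^T:[0,T]\times\bar\Omega\to\mathbb{C}^2$, $$i\partial_t\varPhi=\Big(-\frac{i}{\varepsilon}\sigma_1\partial_x+\frac1\varepsilon\sigma_3\Big)\varPhi+\big(V(t,x)I_2-A_1(t,x)\sigma_1\big)\varPhi,\quad t>0,\ x\in\Omega,$$ with periodic boundary conditions $\varPhi(t,a)=\varPhi(t,b)$, $\partial_x\varPhi(t,a)=\partial_x\varPhi(t,b)$ and initial data $\varPhi(0,x)=\varPhi_0(x)$, where $\varPhi_0(a)=\varPhi_0(b)$, $\varPhi_0'(a)=\varPhi_0'(b)$. Let $0<T<T^*$, $T^*$ the maximal existence time, $\Omega_T=[0,T]\times\Omega$. Assumption (A): $\varPhi\in C^3([0,T];(L^\infty)^2)\cap C^2([0,T];(W^{1,\infty}_p)^2)\cap C^1([0,T];(W^{2,\infty}_p)^2)\cap C([0,T];(W^{3,\infty}_p)^2)$ and $\|\partial_t^r\partial_x^s\varPhi\|_{L^\infty([0,T];(L^\infty(\Omega))^2)}\lesssim\varepsilon^{-r}$ for $0\le r\le3$, $0\le r+s\le3$, uniformly in $0<\varepsilon\le1$; here $W^{m,\infty}_p(\Omega)=\{u\in W^{m,\infty}(\Omega):\partial_x^lu(a)=\partial_x^lu(b),\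 l=0,\dots,m-1\}$. Assumption (B): $V,A_1\in C(\bar\Omega_T)$; set $V_{\max}=\max_{\bar\Omega_T}|V|$, $A_{1,\max}=\max_{\bar\Omega_T}|A_1|$. Discretization: $M\in\mathbb{N}$, $h=(b-a)/M$, $x_j=a+jh$, $\tau>0$, $t_n=n\tau$; periodic grid convention $\varPhi^n_M=\varPhi^n_0$, $\varPhi^n_{-1}=\varPhi^n_{M-1}$, $\varPhi^n_{M+1}=\varPhi^n_1$. $\delta_t^+\varPhi^n_j=(\varPhi^{n+1}_j-\varPhi^n_j)/\tau$, $\delta_x\varPhi^n_j=(\varPhi^n_{j+1}-\varPhi^n_{j-1})/(2h)$, $\varPhi^{n+1/2}_j=(\varPhi^{n+1}_j+\varPhi^n_j)/2$, $V^{n+1/2}_j=V(t_n+\tau/2,x_j)$, $A^{n+1/2}_{1,j}=A_1(t_n+\tau/2,x_j)$. CNFD scheme: for $n\ge0$, $j=0,\dots,M-1$, $$i\delta_t^+\varPhi^n_j=\frac1\varepsilon(-i\sigma_1\delta_x+\sigma_3)\varPhi^{n+1/2}_j+\big(V^{n+1/2}_jI_2-A^{n+1/2}_{1,j}\sigma_1\big)\varPhi^{n+1/2}_j,$$ with $\varPhi^{n+1}_M=\varPhi^{n+1}_0$, $\varPhi^{n+1}_{-1}=\varPhi^{n+1}_{M-1}$, $\varPhi^0_j=\varPhi_0(x_j)$ for $j=0,\dots,M$. *)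

theory Defs
  imports "HOL-Analysis.Analysis"
begin

text \<open>Spinors are elements of complex^2 (Euclidean norm, so norm e = |e| as in the paper);
  2x2 complex matrices are complex^2^2 acting by *v.\<close>

definition sigma1 :: "complex^2^2" where
  "sigma1 = (\<chi> i j. if i = j then 0 else 1)"

definition sigma3 :: "complex^2^2" where
  "sigma3 = (\<chi> i j. if i = j then (if i = 1 then 1 else -1) else 0)"

definition I2 :: "complex^2^2" where
  "I2 = mat 1"

definition mscale :: "complex \<Rightarrow> complex^2^2 \<Rightarrow> complex^2^2" where
  "mscale c A = (\<chi> i j. c * A $ i $ j)"

text \<open>Right-hand side operator of the Dirac equation applied to a spinor u with
  x-derivative ux, at a point with potentials v = V(t,x), w = A1(t,x).\<close>
definition dirac_rhs :: "real \<Rightarrow> real \<Rightarrow> real \<Rightarrow> complex^2 \<Rightarrow> complex^2 \<Rightarrow> complex^2" where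
  "dirac_rhs \<epsilon> v w ux u =
     (complex_of_real (1/\<epsilon>)) *s ((- \<i>) *s (sigma1 *v ux) + sigma3 *v u)
     + (mscale (complex_of_real v) I2 - mscale (complex_of_real w) sigma1) *v u"

text \<open>Exact solution on [0,T] x [a,b] in the sense of assumption (A), for a fixed \<epsilon>:
  D r s t x stands for the partial derivative d_t^r d_x^s Phi(t,x).
  All derivatives of order \<le> 2 exist classically, are continuous on the closed
  domain and periodic in x; the third-order derivatives (in L^\<infinity>) are encoded
  as Lipschitz bounds on the second-order derivatives.\<close>
definition dirac_solution ::
  "real \<Rightarrow> real \<Rightarrow> real \<Rightarrow> real \<Rightarrow> real \<Rightarrow> (real \<Rightarrow> real \<Rightarrow> real)
     \<Rightarrow> (real \<Rightarrow> real \<Rightarrow> real) \<Rightarrow> (nat \<Rightarrow> nat \<Rightarrow> real \<Rightarrow> real \<Rightarrow> complex^2) \<Rightarrow> bool" where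
  "dirac_solution a b T K \<epsilon> V A1 D \<longleftrightarrow>
     \<comment> \<open>classical derivatives (orders up to 2)\<close>
     (\<forall>r s t x. r + s \<le> 1 \<longrightarrow> t \<in> {0..T} \<longrightarrow> x \<in> {a..b} \<longrightarrow>
        ((\<lambda>t'. D r s t' x) has_vector_derivative D (Suc r) s t x) (at t within {0..T}) \<and>
        ((\<lambda>x'. D r s t x') has_vector_derivative D r (Suc s) t x) (at x within {a..b})) \<and>
     \<comment> \<open>continuity on the closed domain\<close>
     (\<forall>r s. r + s \<le> 2 \<longrightarrow> continuous_on ({0..T} \<times> {a..b}) (\<lambda>(t,x). D r s t x)) \<and>
     \<comment> \<open>periodicity in x\<close>
     (\<forall>r s t. r + s \<le> 2 \<longrightarrow> t \<in> {0..T} \<longrightarrow> D r s t a = D r s t b) \<and>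
     \<comment> \<open>bounds  |d_t^r d_x^s Phi| \<le> K \<epsilon>^(-r),  r + s \<le> 2\<close>
     (\<forall>r s t x. r + s \<le> 2 \<longrightarrow> t \<in> {0..T} \<longrightarrow> x \<in> {a..b} \<longrightarrow>
        norm (D r s t x) \<le> K / \<epsilon> ^ r) \<and>
     \<comment> \<open>third order: Lipschitz bounds of the second-order derivatives\<close>
     (\<forall>r s t t' x. r + s = 2 \<longrightarrow> t \<in> {0..T} \<longrightarrow> t' \<in> {0..T} \<longrightarrow> x \<in> {a..b} \<longrightarrow>
        norm (D r s t x - D r s t' x) \<le> K / \<epsilon> ^ (Suc r) * \<bar>t - t'\<bar>) \<and>
     (\<forall>r s t x x'. r + s = 2 \<longrightarrow> t \<in> {0..T} \<longrightarrow> x \<in> {a..b} \<longrightarrow> x' \<in> {a..b} \<longrightarrow>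
        norm (D r s t x - D r s t x') \<le> K / \<epsilon> ^ r * \<bar>x - x'\<bar>) \<and>
     \<comment> \<open>the Dirac equation\<close>
     (\<forall>t x. t \<in> {0..T} \<longrightarrow> x \<in> {a<..<b} \<longrightarrow>
        \<i> *s D 1 0 t x = dirac_rhs \<epsilon> (V t x) (A1 t x) (D 0 1 t x) (D 0 0 t x))"

text \<open>CNFD scheme on the periodic grid x_j = a + j h, j = 0..M-1 (indices mod M),
  h = (b-a)/M, time steps t_n = n \<tau>, imposed for all steps with t_{n+1} \<le> T,
  initial data Phi^0_j = Phi_0(x_j).\<close>
definition cnfd_solution ::
  "real \<Rightarrow> real \<Rightarrow> real \<Rightarrow> real \<Rightarrow> (real \<Rightarrow> real \<Rightarrow> real) \<Rightarrow> (real \<Rightarrow> real \<Rightarrow> real)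
     \<Rightarrow> (real \<Rightarrow> complex^2) \<Rightarrow> nat \<Rightarrow> real \<Rightarrow> (nat \<Rightarrow> nat \<Rightarrow> complex^2) \<Rightarrow> bool" where
  "cnfd_solution a b T \<epsilon> V A1 Phi0 M \<tau> P \<longleftrightarrow>
     (let h = (b - a) / real M in
      (\<forall>j<M. P 0 j = Phi0 (a + real j * h)) \<and>
      (\<forall>n j. real (Suc n) * \<tau> \<le> T \<longrightarrow> j < M \<longrightarrow>
         (let Q = (\<lambda>k. (1/2 :: complex) *s (P (Suc n) k + P n k));
              tm = real n * \<tau> + \<tau> / 2; xj = a + real j * h in
          \<i> *s ((complex_of_real (1/\<tau>)) *s (P (Suc n) j - P n j)) =
            dirac_rhs \<epsilon> (V tm xj) (A1 tm xj)
              ((complex_of_real (1 / (2*h))) *s (Q ((j + 1) mod M) - Q ((j + M - 1) mod M)))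
              (Q j))))"

definition grid_l2 :: "nat \<Rightarrow> real \<Rightarrow> (nat \<Rightarrow> complex^2) \<Rightarrow> real" where
  "grid_l2 M h e = sqrt (h * (\<Sum>j<M. (norm (e j))\<^sup>2))"

end

theory Submission
  imports Defs
begin

lemma seg_sub: fixes x0 x :: real assumes "convex S" "x0 \<in> S" "x \<in> S"
  shows "closed_segment x0 x \<subseteq> S"
  using assms by (simp add: closed_segment_subset)

lemma seg_dist: fixes x0 x y :: real assumes "y \<in> closed_segment x0 x"
  shows "\<bar>y - x0\<bar> \<le> \<bar>x - x0\<bar>"
  using assms by (auto simp: closed_segment_eq_real_ivl split: if_splits)

lemma taylor1:
  fixes f f' :: "real \<Rightarrow> 'a::real_normed_vector"
  assumes S: "convex S"
    and der: "\<And>y. y \<in> S \<Longrightarrow> (f has_vector_derivative f' y) (at y within S)"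
    and L: "\<And>y. y \<in> S \<Longrightarrow> norm (f' y - f' x0) \<le> B * \<bar>y - x0\<bar>"
    and x0: "x0 \<in> S" and x: "x \<in> S" and B: "B \<ge> 0"
  shows "norm (f x - f x0 - (x - x0) *\<^sub>R f' x0) \<le> B * (x - x0)\<^sup>2"
proof -
  define S' where "S' = closed_segment x0 x"
  have sub: "S' \<subseteq> S" unfolding S'_def using seg_sub[OF S x0 x] .
  have der': "\<And>y. y \<in> S' \<Longrightarrow> (f has_vector_derivative f' y) (at y within S')"
    using der sub by (meson has_vector_derivative_within_subset subsetD)
  have bd: "norm (f' y - f' x0) \<le> B * \<bar>x - x0\<bar>" if "y \<in> S'" for y
  proof -
    have "norm (f' y - f' x0) \<le> B * \<bar>y - x0\<bar>" using L sub that by auto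
    also have "\<dots> \<le> B * \<bar>x - x0\<bar>" using seg_dist[of y x0 x] that B unfolding S'_def
      by (simp add: mult_left_mono)
    finally show ?thesis .
  qed
  have "norm (f x - f x0 - (x - x0) *\<^sub>R f' x0) \<le> norm (x - x0) * (B * \<bar>x - x0\<bar>)"
    by (rule vector_differentiable_bound_linearization[OF der' _ bd])
       (auto simp: S'_def)
  thus ?thesis by (simp add: power2_eq_square mult_ac)
qed

lemma taylor2:
  fixes f f' f'' :: "real \<Rightarrow> 'a::real_normed_vector"
  assumes S: "convex S"
    and der: "\<And>y. y \<in> S \<Longrightarrow> (f has_vector_derivative f' y) (at y within S)"
    and der2: "\<And>y. y \<in> S \<Longrightarrow> (f' has_vector_derivative f'' y) (at y within S)"
    and L: "\<And>y. y \<in> S \<Longrightarrow> norm (f'' y - f'' x0) \<le> L * \<bar>y - x0\<bar>"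
    and x0: "x0 \<in> S" and x: "x \<in> S" and L0: "L \<ge> 0"
  shows "norm (f x - f x0 - (x - x0) *\<^sub>R f' x0 - ((x - x0)\<^sup>2 / 2) *\<^sub>R f'' x0) \<le> L * \<bar>x - x0\<bar> ^ 3"
proof -
  define S' where "S' = closed_segment x0 x"
  have sub: "S' \<subseteq> S" unfolding S'_def using seg_sub[OF S x0 x] .
  have cS': "convex S'" unfolding S'_def by simp
  have x0': "x0 \<in> S'" unfolding S'_def by simp
  define d where "d = \<bar>x - x0\<bar>"
  define G where "G y = f y - ((y - x0)\<^sup>2 / 2) *\<^sub>R f'' x0" for y
  define G' where "G' y = f' y - (y - x0) *\<^sub>R f'' x0" for y
  have derG: "(G has_vector_derivative G' y) (at y within S')" if "y \<in> S'" for y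
  proof -
    have d1: "(f has_vector_derivative f' y) (at y within S')"
      using der sub that by (meson has_vector_derivative_within_subset subsetD)
    have d2: "((\<lambda>y. ((y - x0)\<^sup>2 / 2) *\<^sub>R f'' x0) has_vector_derivative (y - x0) *\<^sub>R f'' x0) (at y within S')"
    proof -
      have r: "((\<lambda>y. (y - x0)\<^sup>2 / 2) has_real_derivative (y - x0)) (at y within S')"
        by (auto intro!: derivative_eq_intros)
      show ?thesis using has_vector_derivative_scaleR[OF r has_vector_derivative_const[of "f'' x0"]]
        by simp
    qed
    show ?thesis unfolding G_def G'_def
      using has_vector_derivative_diff[OF d1 d2] by simp
  qed
  have bd: "norm (G' y - G' x0) \<le> L * d * d" if "y \<in> S'" for y
  proof -
    have dy: "\<bar>y - x0\<bar> \<le> d" using seg_dist[of y x0 x] that unfolding S'_def d_def by simp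
    have der2': "\<And>z. z \<in> S' \<Longrightarrow> (f' has_vector_derivative f'' z) (at z within S')"
      using der2 sub by (meson has_vector_derivative_within_subset subsetD)
    have b2: "norm (f'' z - f'' x0) \<le> L * d" if "z \<in> S'" for z
    proof -
      have "norm (f'' z - f'' x0) \<le> L * \<bar>z - x0\<bar>" using L sub that by auto
      also have "\<dots> \<le> L * d" using seg_dist[of z x0 x] that L0 unfolding S'_def d_def
        by (simp add: mult_left_mono)
      finally show ?thesis .
    qed
    have "norm (f' y - f' x0 - (y - x0) *\<^sub>R f'' x0) \<le> norm (y - x0) * (L * d)"
      by (rule vector_differentiable_bound_linearization[OF der2' _ b2 x0'])
         (use seg_sub[OF cS' x0' that] in auto)
    also have "\<dots> \<le> d * (L * d)" using dy L0 d_def by (simp add: mult_right_mono)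
    finally show ?thesis unfolding G'_def by (simp add: algebra_simps)
  qed
  have "norm (G x - G x0 - (x - x0) *\<^sub>R G' x0) \<le> norm (x - x0) * (L * d * d)"
    by (rule vector_differentiable_bound_linearization[OF derG _ bd x0']) (auto simp: S'_def)
  moreover have "G x - G x0 - (x - x0) *\<^sub>R G' x0 = f x - f x0 - (x - x0) *\<^sub>R f' x0 - ((x - x0)\<^sup>2 / 2) *\<^sub>R f'' x0"
    unfolding G_def G'_def by (simp add: algebra_simps)
  ultimately show ?thesis by (simp add: d_def power3_eq_cube mult_ac)
qed

lemma mvt_bound:
  fixes f f' :: "real \<Rightarrow> 'a::real_normed_vector"
  assumes S: "convex S"
    and der: "\<And>y. y \<in> S \<Longrightarrow> (f has_vector_derivative f' y) (at y within S)"
    and B: "\<And>y. y \<in> S \<Longrightarrow> norm (f' y) \<le> B"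
    and x: "x \<in> S" and y: "y \<in> S"
  shows "norm (f x - f y) \<le> B * \<bar>x - y\<bar>"
proof -
  have "norm (f x - f y) \<le> B * norm (x - y)"
  proof (rule differentiable_bound[OF S _ _ x y])
    show "(f has_derivative (\<lambda>h. h *\<^sub>R f' z)) (at z within S)" if "z \<in> S" for z
      using der[OF that] by (simp add: has_vector_derivative_def)
    show "onorm (\<lambda>h. h *\<^sub>R f' z) \<le> B" if "z \<in> S" for z
      by (rule onorm_le) (use B[OF that] in \<open>simp, metis abs_ge_zero mult.commute mult_left_mono\<close>)
  qed
  thus ?thesis by simp
qed

lemma centered:
  fixes f f' f'' :: "real \<Rightarrow> 'a::real_normed_vector"
  assumes S: "convex S"
    and der: "\<And>y. y \<in> S \<Longrightarrow> (f has_vector_derivative f' y) (at y within S)"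
    and der2: "\<And>y. y \<in> S \<Longrightarrow> (f' has_vector_derivative f'' y) (at y within S)"
    and L: "\<And>y z. y \<in> S \<Longrightarrow> z \<in> S \<Longrightarrow> norm (f'' y - f'' z) \<le> L * \<bar>y - z\<bar>"
    and x0: "x0 \<in> S" and xp: "x0 + h \<in> S" and xm: "x0 - h \<in> S" and L0: "L \<ge> 0" and h: "h \<ge> 0"
  shows "norm (f (x0 + h) - f (x0 - h) - (2 * h) *\<^sub>R f' x0) \<le> 2 * L * h ^ 3"
proof -
  have A: "norm (f (x0 + h) - f x0 - ((x0 + h) - x0) *\<^sub>R f' x0 - (((x0 + h) - x0)\<^sup>2 / 2) *\<^sub>R f'' x0) \<le> L * \<bar>(x0 + h) - x0\<bar> ^ 3"
    by (rule taylor2[OF S der der2 _ x0 xp L0]) (use L x0 in auto)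
  have B: "norm (f (x0 - h) - f x0 - ((x0 - h) - x0) *\<^sub>R f' x0 - (((x0 - h) - x0)\<^sup>2 / 2) *\<^sub>R f'' x0) \<le> L * \<bar>(x0 - h) - x0\<bar> ^ 3"
    by (rule taylor2[OF S der der2 _ x0 xm L0]) (use L x0 in auto)
  have e: "f (x0 + h) - f (x0 - h) - (2 * h) *\<^sub>R f' x0 =
     (f (x0 + h) - f x0 - ((x0 + h) - x0) *\<^sub>R f' x0 - (((x0 + h) - x0)\<^sup>2 / 2) *\<^sub>R f'' x0)
   - (f (x0 - h) - f x0 - ((x0 - h) - x0) *\<^sub>R f' x0 - (((x0 - h) - x0)\<^sup>2 / 2) *\<^sub>R f'' x0)"
    by (simp add: algebra_simps scaleR_diff_left[symmetric] scaleR_add_left[symmetric])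
  show ?thesis unfolding e using norm_triangle_ineq4[of "f (x0 + h) - f x0 - ((x0 + h) - x0) *\<^sub>R f' x0 - (((x0 + h) - x0)\<^sup>2 / 2) *\<^sub>R f'' x0"
     "f (x0 - h) - f x0 - ((x0 - h) - x0) *\<^sub>R f' x0 - (((x0 - h) - x0)\<^sup>2 / 2) *\<^sub>R f'' x0"] A B h
    by simp
qed

lemma centered_per:
  fixes f f' f'' :: "real \<Rightarrow> 'a::real_normed_vector"
  assumes S: "convex S"
    and der: "\<And>y. y \<in> S \<Longrightarrow> (f has_vector_derivative f' y) (at y within S)"
    and der2: "\<And>y. y \<in> S \<Longrightarrow> (f' has_vector_derivative f'' y) (at y within S)"
    and L: "\<And>y z. y \<in> S \<Longrightarrow> z \<in> S \<Longrightarrow> norm (f'' y - f'' z) \<le> L * \<bar>y - z\<bar>"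
    and p: "p \<in> S" and q: "q \<in> S" and xp: "p + h \<in> S" and xm: "q - h \<in> S" and L0: "L \<ge> 0" and h: "h \<ge> 0"
    and e0: "f p = f q" and e1: "f' p = f' q" and e2: "f'' p = f'' q"
  shows "norm (f (p + h) - f (q - h) - (2 * h) *\<^sub>R f' p) \<le> 2 * L * h ^ 3"
proof -
  have A: "norm (f (p + h) - f p - ((p + h) - p) *\<^sub>R f' p - (((p + h) - p)\<^sup>2 / 2) *\<^sub>R f'' p) \<le> L * \<bar>(p + h) - p\<bar> ^ 3"
    by (rule taylor2[OF S der der2 _ p xp L0]) (use L p in auto)
  have B: "norm (f (q - h) - f q - ((q - h) - q) *\<^sub>R f' q - (((q - h) - q)\<^sup>2 / 2) *\<^sub>R f'' q) \<le> L * \<bar>(q - h) - q\<bar> ^ 3"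
    by (rule taylor2[OF S der der2 _ q xm L0]) (use L q in auto)
  have e: "f (p + h) - f (q - h) - (2 * h) *\<^sub>R f' p =
     (f (p + h) - f p - ((p + h) - p) *\<^sub>R f' p - (((p + h) - p)\<^sup>2 / 2) *\<^sub>R f'' p)
   - (f (q - h) - f q - ((q - h) - q) *\<^sub>R f' q - (((q - h) - q)\<^sup>2 / 2) *\<^sub>R f'' q)"
    unfolding e0 e1 e2 by (simp add: algebra_simps scaleR_diff_left[symmetric] scaleR_add_left[symmetric])
  show ?thesis unfolding e using norm_triangle_ineq4[of "f (p + h) - f p - ((p + h) - p) *\<^sub>R f' p - (((p + h) - p)\<^sup>2 / 2) *\<^sub>R f'' p"
     "f (q - h) - f q - ((q - h) - q) *\<^sub>R f' q - (((q - h) - q)\<^sup>2 / 2) *\<^sub>R f'' q"] A B h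
    by simp
qed

lemma average:
  fixes f f' :: "real \<Rightarrow> 'a::real_normed_vector"
  assumes S: "convex S"
    and der: "\<And>y. y \<in> S \<Longrightarrow> (f has_vector_derivative f' y) (at y within S)"
    and L: "\<And>y. y \<in> S \<Longrightarrow> norm (f' y - f' x0) \<le> B * \<bar>y - x0\<bar>"
    and x0: "x0 \<in> S" and xp: "x0 + h \<in> S" and xm: "x0 - h \<in> S" and B0: "B \<ge> 0"
  shows "norm ((1/2) *\<^sub>R (f (x0 + h) + f (x0 - h)) - f x0) \<le> B * h\<^sup>2"
proof -
  have A: "norm (f (x0 + h) - f x0 - ((x0 + h) - x0) *\<^sub>R f' x0) \<le> B * ((x0 + h) - x0)\<^sup>2"
    by (rule taylor1[OF S der L x0 xp B0])
  have C: "norm (f (x0 - h) - f x0 - ((x0 - h) - x0) *\<^sub>R f' x0) \<le> B * ((x0 - h) - x0)\<^sup>2"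
    by (rule taylor1[OF S der L x0 xm B0])
  have e: "(1/2) *\<^sub>R (f (x0 + h) + f (x0 - h)) - f x0 = (1/2) *\<^sub>R
     ((f (x0 + h) - f x0 - ((x0 + h) - x0) *\<^sub>R f' x0) + (f (x0 - h) - f x0 - ((x0 - h) - x0) *\<^sub>R f' x0))"
    apply (simp add: algebra_simps scaleR_diff_left[symmetric])
    by (simp add: scaleR_add_left[symmetric])
  have "norm ((1/2) *\<^sub>R (f (x0 + h) + f (x0 - h)) - f x0) \<le> (1/2) * (B * h\<^sup>2 + B * h\<^sup>2)"
    unfolding e using norm_triangle_ineq[of "f (x0 + h) - f x0 - ((x0 + h) - x0) *\<^sub>R f' x0" "f (x0 - h) - f x0 - ((x0 - h) - x0) *\<^sub>R f' x0"] A C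
    by simp
  thus ?thesis by simp
qed

lemma s1c [simp]: "(sigma1 *v u) $ 1 = u $ 2" "(sigma1 *v u) $ 2 = u $ 1"
  by (simp_all add: sigma1_def matrix_vector_mult_def sum_2)

lemma s3c [simp]: "(sigma3 *v u) $ 1 = u $ 1" "(sigma3 *v u) $ 2 = - u $ 2"
  by (simp_all add: sigma3_def matrix_vector_mult_def sum_2)

lemma msc [simp]: "(mscale c I2 *v u) = c *s u" "(mscale c sigma1 *v u) = c *s (sigma1 *v u)"
  by (simp_all add: mscale_def I2_def sigma1_def matrix_vector_mult_def sum_2 vec_eq_iff forall_2 mat_def)

lemma rhs1: "(dirac_rhs e v w ux u) $ 1 = complex_of_real (1/e) * (- \<i> * ux $ 2 + u $ 1) + complex_of_real v * u $ 1 - complex_of_real w * u $ 2"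
  by (simp add: dirac_rhs_def matrix_vector_mult_diff_rdistrib diff_divide_distrib add_divide_distrib)
lemma rhs2: "(dirac_rhs e v w ux u) $ 2 = complex_of_real (1/e) * (- \<i> * ux $ 1 - u $ 2) + complex_of_real v * u $ 2 - complex_of_real w * u $ 1"
  by (simp add: dirac_rhs_def matrix_vector_mult_diff_rdistrib diff_divide_distrib add_divide_distrib)

lemma rhs_lin: "dirac_rhs e v w (ux1 - ux2) (u1 - u2) = dirac_rhs e v w ux1 u1 - dirac_rhs e v w ux2 u2"
  by (simp add: vec_eq_iff forall_2 rhs1 rhs2 algebra_simps)

lemma norm2: "norm (u :: complex^2) = sqrt ((cmod (u$1))\<^sup>2 + (cmod (u$2))\<^sup>2)"
  by (simp add: norm_vec_def L2_set_def sum_2)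

lemma inner2: "inner (x :: complex^2) y = Re (x$1 * cnj (y$1)) + Re (x$2 * cnj (y$2))"
  by (simp add: inner_vec_def sum_2 inner_complex_def)

lemma norm_smult: "norm (c *s (u :: complex^2)) = cmod c * norm u"
proof -
  have "(cmod (c * u$1))\<^sup>2 + (cmod (c * u$2))\<^sup>2 = (cmod c)\<^sup>2 * ((cmod (u$1))\<^sup>2 + (cmod (u$2))\<^sup>2)"
    by (simp add: norm_mult power_mult_distrib algebra_simps)
  thus ?thesis by (simp add: norm2 real_sqrt_mult)
qed

lemma norm_s1 [simp]: "norm (sigma1 *v u) = norm u"
  by (simp add: norm2 add.commute)
lemma norm_s3 [simp]: "norm (sigma3 *v u) = norm u"
  by (simp add: norm2)

lemma ofreal_s: "complex_of_real r *s (u :: complex^2) = r *\<^sub>R u"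
  unfolding vec_eq_iff by (simp add: scaleR_conv_of_real[where 'a=complex])

lemma rhs_bound:
  assumes "e > 0"
  shows "norm (dirac_rhs e v w ux u) \<le> (1/e) * norm ux + (1/e + \<bar>v\<bar> + \<bar>w\<bar>) * norm u"
proof -
  define A where "A = complex_of_real (1/e) *s ((- \<i>) *s (sigma1 *v ux))"
  define B where "B = complex_of_real (1/e) *s (sigma3 *v u)"
  define C where "C = complex_of_real v *s u"
  define D where "D = complex_of_real w *s (sigma1 *v u)"
  have eq: "dirac_rhs e v w ux u = A + B + C - D"
    unfolding A_def B_def C_def D_def
    by (simp add: vec_eq_iff forall_2 rhs1 rhs2 algebra_simps)
  have "norm (A + B + C - D) \<le> norm A + norm B + norm C + norm D"
    by (smt (verit) norm_triangle_ineq norm_triangle_ineq4)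
  also have "\<dots> = (1/e) * norm ux + (1/e) * norm u + \<bar>v\<bar> * norm u + \<bar>w\<bar> * norm u"
    using assms unfolding A_def B_def C_def D_def by (simp add: norm_smult norm_divide)
  finally show ?thesis unfolding eq by (simp add: algebra_simps)
qed

definition Bf :: "complex^2 \<Rightarrow> complex^2 \<Rightarrow> real" where
  "Bf u q = Re (u$2 * cnj (q$1)) + Re (u$1 * cnj (q$2))"

lemma Bf_sym: "Bf u q = Bf q u"
  unfolding Bf_def by (simp add: algebra_simps)

lemma Bf_diff: "Bf (x - y) q = Bf x q - Bf y q"
  unfolding Bf_def by (simp add: algebra_simps)

lemma key_inner:
  assumes "e > 0"
  shows "inner ((- \<i>) *s dirac_rhs e v w (complex_of_real c *s D) q) q = - (c / e) * Bf D q"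
  using assms unfolding Bf_def inner2
  by (simp add: rhs1 rhs2 algebra_simps add_divide_distrib)


lemma sum_shift:
  fixes M :: nat
  assumes "M > 0"
  shows "(\<Sum>j<M. g ((j + 1) mod M)) = (\<Sum>j<M. g j)"
proof -
  obtain m where m: "M = Suc m" using assms by (cases M) auto
  have "(\<Sum>j<Suc m. g ((j + 1) mod Suc m)) = (\<Sum>j<m. g ((j + 1) mod Suc m)) + g ((m + 1) mod Suc m)"
    by simp
  also have "(\<Sum>j<m. g ((j + 1) mod Suc m)) = (\<Sum>j<m. g (Suc j))"
    by (rule sum.cong) auto
  also have "g ((m + 1) mod Suc m) = g 0" by simp
  also have "(\<Sum>j<m. g (Suc j)) + g 0 = (\<Sum>j<Suc m. g j)"
    by (metis add.commute sum.lessThan_Suc_shift)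
  finally show ?thesis using m by simp
qed

lemma mod_back: "j < (M::nat) \<Longrightarrow> ((j + 1) mod M + M - 1) mod M = j"
proof (cases "j + 1 < M")
  case True
  assume "j < M"
  have "(j + 1) mod M = j + 1" using True by (simp add: mod_less)
  moreover have "(j + 1 + M - 1) mod M = j" using True by simp
  ultimately show ?thesis by simp
next
  case False
  assume "j < M"
  hence "j + 1 = M" using False by simp
  thus ?thesis using \<open>j < M\<close> by (cases M) auto
qed

lemma sum_Bf_zero:
  fixes M :: nat
  assumes "M > 0"
  shows "(\<Sum>j<M. Bf (Q ((j + 1) mod M) - Q ((j + M - 1) mod M)) (Q j)) = 0"
proof -
  have "(\<Sum>j<M. Bf (Q ((j + M - 1) mod M)) (Q j))
      = (\<Sum>j<M. Bf (Q (((j + 1) mod M + M - 1) mod M)) (Q ((j + 1) mod M)))"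
    using sum_shift[OF assms, of "\<lambda>j. Bf (Q ((j + M - 1) mod M)) (Q j)"] by simp
  also have "\<dots> = (\<Sum>j<M. Bf (Q j) (Q ((j + 1) mod M)))"
    by (rule sum.cong) (auto simp: mod_back[simplified])
  also have "\<dots> = (\<Sum>j<M. Bf (Q ((j + 1) mod M)) (Q j))"
    by (simp add: Bf_sym)
  finally show ?thesis by (simp add: Bf_diff sum_subtractf)
qed

lemma solve_step:
  assumes "\<tau> > 0" and "\<i> *s (complex_of_real (1/\<tau>) *s d) = X"
  shows "d = \<tau> *\<^sub>R ((- \<i>) *s X)"
  using assms(1) unfolding assms(2)[symmetric] vec_eq_iff
  by (simp add: scaleR_conv_of_real[where 'a=complex])

lemma final_arith:
  fixes S0 S1 Sx t :: real
  assumes "S0 \<ge> 0" "S1 \<ge> 0" "Sx \<ge> 0" "t \<ge> 0" "S1\<^sup>2 - S0\<^sup>2 \<le> t * Sx * (S1 + S0)"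
  shows "S1 \<le> S0 + t * Sx"
proof (rule ccontr)
  assume "\<not> ?thesis"
  hence a: "S1 - S0 > t * Sx" by simp
  have "t * Sx \<ge> 0" using assms by simp
  hence "S1 + S0 > 0" using a assms by linarith
  hence "(S1 - S0) * (S1 + S0) > t * Sx * (S1 + S0)" using a by (simp add: mult_strict_right_mono)
  thus False using assms(5) by (simp add: power2_eq_square algebra_simps)
qed

lemma smult_dist: "c *s (x + y) = c *s x + c *s (y :: complex^2)"
  by (simp add: vec_eq_iff algebra_simps)

lemma energy:
  fixes e0 e1 xi Q :: "nat \<Rightarrow> complex^2" and v w :: "nat \<Rightarrow> real"
  assumes M: "M > 0" and h: "h > 0" and tau: "\<tau> > 0" and ep: "\<epsilon> > 0"
    and Qdef: "\<And>k. Q k = (1/2::complex) *s (e1 k + e0 k)"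
    and eq: "\<And>j. j < M \<Longrightarrow> \<i> *s (complex_of_real (1/\<tau>) *s (e1 j - e0 j)) =
        dirac_rhs \<epsilon> (v j) (w j) (complex_of_real (1/(2*h)) *s (Q ((j+1) mod M) - Q ((j+M-1) mod M))) (Q j) + xi j"
  shows "L2_set (\<lambda>j. norm (e1 j)) {..<M} \<le> L2_set (\<lambda>j. norm (e0 j)) {..<M} + \<tau> * L2_set (\<lambda>j. norm (xi j)) {..<M}"
proof -
  define c where "c = 1/(2*h)"
  define R where "R j = dirac_rhs \<epsilon> (v j) (w j) (complex_of_real c *s (Q ((j+1) mod M) - Q ((j+M-1) mod M))) (Q j)" for j
  define BB where "BB j = Bf (Q ((j+1) mod M) - Q ((j+M-1) mod M)) (Q j)" for j
  have step: "(norm (e1 j))\<^sup>2 - (norm (e0 j))\<^sup>2 \<le> 2 * \<tau> * (- (c / \<epsilon>) * BB j) + \<tau> * (norm (xi j) * (norm (e1 j) + norm (e0 j)))"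
    if j: "j < M" for j
  proof -
    have d: "e1 j - e0 j = \<tau> *\<^sub>R ((- \<i>) *s (R j + xi j))"
      using solve_step[OF tau eq[OF j]] unfolding R_def c_def by simp
    have Qj: "Q j = (1/2) *\<^sub>R (e1 j + e0 j)"
      using Qdef[of j] ofreal_s[of "1/2" "e1 j + e0 j"] by simp
    have sq: "(norm (e1 j))\<^sup>2 - (norm (e0 j))\<^sup>2 = 2 * inner (e1 j - e0 j) (Q j)"
      unfolding Qj by (simp add: power2_norm_eq_inner inner_diff_left inner_add_right inner_commute algebra_simps)
    have i1: "inner ((- \<i>) *s R j) (Q j) = - (c / \<epsilon>) * BB j"
      unfolding R_def BB_def by (rule key_inner[OF ep])
    have i2: "inner ((- \<i>) *s xi j) (Q j) \<le> norm (xi j) * ((norm (e1 j) + norm (e0 j)) / 2)"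
    proof -
      have "inner ((- \<i>) *s xi j) (Q j) \<le> norm ((- \<i>) *s xi j) * norm (Q j)"
        by (rule norm_cauchy_schwarz)
      also have "\<dots> = norm (xi j) * norm (Q j)" by (simp add: norm_smult)
      also have "norm (Q j) \<le> (norm (e1 j) + norm (e0 j)) / 2"
        unfolding Qj using norm_triangle_ineq[of "e1 j" "e0 j"] by simp
      hence "norm (xi j) * norm (Q j) \<le> norm (xi j) * ((norm (e1 j) + norm (e0 j)) / 2)"
        by (metis mult_left_mono norm_ge_zero)
      finally show ?thesis .
    qed
    have "inner (e1 j - e0 j) (Q j) = \<tau> * (inner ((- \<i>) *s R j) (Q j) + inner ((- \<i>) *s xi j) (Q j))"
      unfolding d by (simp add: smult_dist inner_add_left inner_diff_left inner_minus_left)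
    hence "(norm (e1 j))\<^sup>2 - (norm (e0 j))\<^sup>2 = 2 * \<tau> * (inner ((- \<i>) *s R j) (Q j) + inner ((- \<i>) *s xi j) (Q j))"
      using sq by simp
    hence e: "(norm (e1 j))\<^sup>2 - (norm (e0 j))\<^sup>2 = 2 * \<tau> * (- (c / \<epsilon>) * BB j) + 2 * (\<tau> * inner ((- \<i>) *s xi j) (Q j))"
      using i1 by (simp add: algebra_simps)
    have f: "\<tau> * inner ((- \<i>) *s xi j) (Q j) \<le> \<tau> * (norm (xi j) * ((norm (e1 j) + norm (e0 j)) / 2))"
      by (rule mult_left_mono[OF i2]) (use tau in simp)
    have g: "2 * (\<tau> * (norm (xi j) * ((norm (e1 j) + norm (e0 j)) / 2))) = \<tau> * (norm (xi j) * (norm (e1 j) + norm (e0 j)))"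
      by simp
    show ?thesis using e f g by linarith
  qed
  define S0 where "S0 = L2_set (\<lambda>j. norm (e0 j)) {..<M}"
  define S1 where "S1 = L2_set (\<lambda>j. norm (e1 j)) {..<M}"
  define Sx where "Sx = L2_set (\<lambda>j. norm (xi j)) {..<M}"
  have S0sq: "S0\<^sup>2 = (\<Sum>j<M. (norm (e0 j))\<^sup>2)" unfolding S0_def L2_set_def
    by (simp add: sum_nonneg)
  have S1sq: "S1\<^sup>2 = (\<Sum>j<M. (norm (e1 j))\<^sup>2)" unfolding S1_def L2_set_def
    by (simp add: sum_nonneg)
  have "S1\<^sup>2 - S0\<^sup>2 = (\<Sum>j<M. (norm (e1 j))\<^sup>2 - (norm (e0 j))\<^sup>2)"
    unfolding S0sq S1sq by (simp add: sum_subtractf)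
  also have "\<dots> \<le> (\<Sum>j<M. (2 * \<tau> * (- (c / \<epsilon>))) * BB j + \<tau> * (\<bar>norm (xi j)\<bar> * \<bar>norm (e1 j)\<bar>) + \<tau> * (\<bar>norm (xi j)\<bar> * \<bar>norm (e0 j)\<bar>))"
  proof (rule sum_mono)
    fix j assume "j \<in> {..<M}"
    hence "j < M" by simp
    from step[OF this] show "(norm (e1 j))\<^sup>2 - (norm (e0 j))\<^sup>2 \<le> (2 * \<tau> * (- (c / \<epsilon>))) * BB j + \<tau> * (\<bar>norm (xi j)\<bar> * \<bar>norm (e1 j)\<bar>) + \<tau> * (\<bar>norm (xi j)\<bar> * \<bar>norm (e0 j)\<bar>)"
      by (simp add: algebra_simps)
  qed
  also have "\<dots> = (2 * \<tau> * (- (c / \<epsilon>))) * (\<Sum>j<M. BB j) + \<tau> * (\<Sum>j<M. \<bar>norm (xi j)\<bar> * \<bar>norm (e1 j)\<bar>) + \<tau> * (\<Sum>j<M. \<bar>norm (xi j)\<bar> * \<bar>norm (e0 j)\<bar>)"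
    by (simp only: sum.distrib sum_distrib_left)
  also have "(\<Sum>j<M. BB j) = 0" unfolding BB_def by (rule sum_Bf_zero[OF M])
  also have "(\<Sum>j<M. \<bar>norm (xi j)\<bar> * \<bar>norm (e1 j)\<bar>) \<le> Sx * S1"
    unfolding Sx_def S1_def by (rule L2_set_mult_ineq)
  also have "(\<Sum>j<M. \<bar>norm (xi j)\<bar> * \<bar>norm (e0 j)\<bar>) \<le> Sx * S0"
    unfolding Sx_def S0_def by (rule L2_set_mult_ineq)
  finally have "S1\<^sup>2 - S0\<^sup>2 \<le> \<tau> * Sx * (S1 + S0)" using tau by (simp add: algebra_simps)
  moreover have "S0 \<ge> 0" "S1 \<ge> 0" "Sx \<ge> 0" unfolding S0_def S1_def Sx_def by simp_all
  ultimately have "S1 \<le> S0 + \<tau> * Sx" using final_arith tau by simp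
  thus ?thesis unfolding S0_def S1_def Sx_def .
qed

lemma cont_slice:
  assumes "continuous_on ({0..T} \<times> {a..b}) (\<lambda>(t,x). f t x)" and "t \<in> {0..T}"
  shows "continuous_on {a..b} (f t)"
proof -
  have "continuous_on {a..b} (\<lambda>x. (\<lambda>(t,x). f t x) (t, x))"
    by (rule continuous_on_compose2[OF assms(1)]) (use assms(2) in \<open>auto intro!: continuous_intros\<close>)
  thus ?thesis by simp
qed

lemma eq_closed:
  fixes D :: "nat \<Rightarrow> nat \<Rightarrow> real \<Rightarrow> real \<Rightarrow> complex^2"
  assumes ab: "a < b" and t: "t \<in> {0..T}" and x: "x \<in> {a..b}" and ep: "\<epsilon> > 0"
    and c10: "continuous_on ({0..T} \<times> {a..b}) (\<lambda>(t,x). D 1 0 t x)"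
    and c01: "continuous_on ({0..T} \<times> {a..b}) (\<lambda>(t,x). D 0 1 t x)"
    and c00: "continuous_on ({0..T} \<times> {a..b}) (\<lambda>(t,x). D 0 0 t x)"
    and cV: "continuous_on ({0..T} \<times> {a..b}) (\<lambda>(t,x). V t x)"
    and cA: "continuous_on ({0..T} \<times> {a..b}) (\<lambda>(t,x). A1 t x)"
    and eqn: "\<And>x. x \<in> {a<..<b} \<Longrightarrow> \<i> *s D 1 0 t x = dirac_rhs \<epsilon> (V t x) (A1 t x) (D 0 1 t x) (D 0 0 t x)"
  shows "\<i> *s D 1 0 t x = dirac_rhs \<epsilon> (V t x) (A1 t x) (D 0 1 t x) (D 0 0 t x)"
proof -
  have s10: "continuous_on {a..b} (D 1 0 t)" by (rule cont_slice[OF c10 t])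
  have s01: "continuous_on {a..b} (D 0 1 t)" by (rule cont_slice[OF c01 t])
  have s00: "continuous_on {a..b} (D 0 0 t)" by (rule cont_slice[OF c00 t])
  have sV: "continuous_on {a..b} (V t)" by (rule cont_slice[OF cV t])
  have sA: "continuous_on {a..b} (A1 t)" by (rule cont_slice[OF cA t])
  have cl: "closure {a<..<b} = {a..b}" using ab by simp
  have comp: "(\<i> *s D 1 0 t x) $ k - (dirac_rhs \<epsilon> (V t x) (A1 t x) (D 0 1 t x) (D 0 0 t x)) $ k = 0" for k
  proof -
    define F where "F y = (\<i> *s D 1 0 t y) $ k - (dirac_rhs \<epsilon> (V t y) (A1 t y) (D 0 1 t y) (D 0 0 t y)) $ k" for y
    have Fc: "continuous_on {a..b} F"
    proof -
      have "continuous_on {a..b} (\<lambda>y. (\<i> *s D 1 0 t y) - dirac_rhs \<epsilon> (V t y) (A1 t y) (D 0 1 t y) (D 0 0 t y))"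
      proof -
        have e: "(\<lambda>y. (\<i> *s D 1 0 t y) - dirac_rhs \<epsilon> (V t y) (A1 t y) (D 0 1 t y) (D 0 0 t y)) =
          (\<lambda>y. \<chi> i. (if i = 1 then \<i> * (D 1 0 t y)$1 - (complex_of_real (1/\<epsilon>) * (- \<i> * (D 0 1 t y) $ 2 + (D 0 0 t y) $ 1) + complex_of_real (V t y) * (D 0 0 t y) $ 1 - complex_of_real (A1 t y) * (D 0 0 t y) $ 2)
               else \<i> * (D 1 0 t y)$2 - (complex_of_real (1/\<epsilon>) * (- \<i> * (D 0 1 t y) $ 1 - (D 0 0 t y) $ 2) + complex_of_real (V t y) * (D 0 0 t y) $ 2 - complex_of_real (A1 t y) * (D 0 0 t y) $ 1)))"
          by (rule ext) (simp add: vec_eq_iff forall_2 rhs1 rhs2)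
        show ?thesis unfolding e
        proof (rule continuous_on_vec_lambda)
          fix i :: 2
          show "continuous_on {a..b} (\<lambda>y. if i = 1 then \<i> * (D 1 0 t y)$1 - (complex_of_real (1/\<epsilon>) * (- \<i> * (D 0 1 t y) $ 2 + (D 0 0 t y) $ 1) + complex_of_real (V t y) * (D 0 0 t y) $ 1 - complex_of_real (A1 t y) * (D 0 0 t y) $ 2)
               else \<i> * (D 1 0 t y)$2 - (complex_of_real (1/\<epsilon>) * (- \<i> * (D 0 1 t y) $ 1 - (D 0 0 t y) $ 2) + complex_of_real (V t y) * (D 0 0 t y) $ 2 - complex_of_real (A1 t y) * (D 0 0 t y) $ 1))"
            using s10 s01 s00 sV sA ep by (cases "i = 1") (auto intro!: continuous_intros continuous_on_component)
        qed
      qed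
      hence "continuous_on {a..b} (\<lambda>y. ((\<i> *s D 1 0 t y) - dirac_rhs \<epsilon> (V t y) (A1 t y) (D 0 1 t y) (D 0 0 t y)) $ k)"
        by (rule continuous_on_component)
      thus ?thesis unfolding F_def by simp
    qed
    have "F x = 0"
      by (rule continuous_constant_on_closure[of "{a<..<b}" F 0]) (use Fc cl eqn x in \<open>auto simp: F_def\<close>)
    thus ?thesis unfolding F_def .
  qed
  show ?thesis using comp by (simp add: vec_eq_iff)
qed

lemma gridX:
  fixes f f' f'' :: "real \<Rightarrow> 'a::real_normed_vector"
  assumes ab: "a < b" and M: "M > 0" and hdef: "h = (b - a) / real M" and j: "j < M"
    and der: "\<And>y. y \<in> {a..b} \<Longrightarrow> (f has_vector_derivative f' y) (at y within {a..b})"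
    and der2: "\<And>y. y \<in> {a..b} \<Longrightarrow> (f' has_vector_derivative f'' y) (at y within {a..b})"
    and L: "\<And>y z. y \<in> {a..b} \<Longrightarrow> z \<in> {a..b} \<Longrightarrow> norm (f'' y - f'' z) \<le> L * \<bar>y - z\<bar>"
    and L0: "L \<ge> 0"
    and e0: "f a = f b" and e1: "f' a = f' b" and e2: "f'' a = f'' b"
  shows "norm (f (a + real ((j + 1) mod M) * h) - f (a + real ((j + M - 1) mod M) * h) - (2 * h) *\<^sub>R f' (a + real j * h)) \<le> 2 * L * h ^ 3"
proof -
  have h0: "h > 0" using ab M hdef by simp
  have aMh: "a + real M * h = b" using M hdef by simp
  have jh: "real j * h \<le> real (M - 1) * h" using j h0 by (intro mult_right_mono) auto
  have Mh: "real (M - 1) * h = b - a - h" using M aMh by (simp add: of_nat_diff algebra_simps)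
  show ?thesis
  proof (cases "j = 0")
    case True
    have fp: "f (a + real ((j + 1) mod M) * h) = f (a + h)"
    proof (cases "M = 1")
      case True
      thus ?thesis using \<open>j = 0\<close> aMh e0 by simp
    next
      case False
      hence "(j + 1) mod M = 1" using \<open>j = 0\<close> M by simp
      thus ?thesis by simp
    qed
    have fm: "f (a + real ((j + M - 1) mod M) * h) = f (b - h)"
    proof -
      have "(j + M - 1) mod M = M - 1" using \<open>j = 0\<close> M by simp
      hence "a + real ((j + M - 1) mod M) * h = b - h" using Mh by simp
      thus ?thesis by simp
    qed
    have "h * 1 \<le> h * real M" using M h0 by (intro mult_left_mono) auto
    hence hb: "h \<le> b - a" using aMh by (simp add: algebra_simps)
    have xp: "a + h \<in> {a..b}" and xm: "b - h \<in> {a..b}" using hb h0 by auto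
    have "norm (f (a + h) - f (b - h) - (2 * h) *\<^sub>R f' a) \<le> 2 * L * h ^ 3"
      by (rule centered_per[of "{a..b}" f f' f'' L a b h, OF _ der der2 L _ _ xp xm L0 _ e0 e1 e2])
         (use ab h0 in auto)
    thus ?thesis unfolding fp fm using \<open>j = 0\<close> by simp
  next
    case False
    have "real j * h \<ge> 0" using h0 by simp
    moreover have "real j * h \<le> b - a - h" using jh Mh by linarith
    ultimately have xj: "a + real j * h \<in> {a..b}" using h0 by auto
    have fm: "f (a + real ((j + M - 1) mod M) * h) = f ((a + real j * h) - h)"
    proof -
      have e: "j + M - 1 = (j - 1) + M" using False by simp
      have "(j + M - 1) mod M = j - 1" unfolding e using j by simp
      thus ?thesis using False by (simp add: of_nat_diff algebra_simps)
    qed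
    have fp: "f (a + real ((j + 1) mod M) * h) = f ((a + real j * h) + h)"
    proof (cases "j + 1 < M")
      case True
      thus ?thesis by (simp add: algebra_simps)
    next
      case False
      hence "j + 1 = M" using j by simp
      hence rM: "real M = real j + 1" by (subst \<open>j + 1 = M\<close>[symmetric]) simp
      have "a + real j * h + h = b" using aMh unfolding rM by (simp add: algebra_simps)
      thus ?thesis using \<open>j + 1 = M\<close> e0 by simp
    qed
    have xp: "(a + real j * h) + h \<in> {a..b}"
    proof -
      have "real j + 1 \<le> real M" using j by simp
      hence "(real j + 1) * h \<le> real M * h" using h0 by (intro mult_right_mono) auto
      thus ?thesis using h0 aMh by (auto simp: algebra_simps)
    qed
    have xm: "(a + real j * h) - h \<in> {a..b}"
    proof -
      have "1 \<le> real j" using False by simp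
      hence "1 * h \<le> real j * h" using h0 by (intro mult_right_mono) auto
      thus ?thesis using xj h0 by auto
    qed
    show ?thesis unfolding fp fm
      using centered[of "{a..b}" f f' f'' L "a + real j * h" h, OF _ der der2 L xj xp xm L0] h0 by simp
  qed
qed

lemma num_final:
  fixes \<epsilon> \<tau> K Vm Am h :: real
  assumes ep: "0 < \<epsilon>" and ep1: "\<epsilon> \<le> 1" and tau: "\<tau> > 0" and K0: "K \<ge> 0" and V0: "Vm \<ge> 0" and A0: "Am \<ge> 0"
  shows "(1/\<tau>) * (2 * (K / \<epsilon> ^ 3) * (\<tau> / 2) ^ 3) + ((1/\<epsilon>) * (K * h\<^sup>2 + K / \<epsilon> ^ 2 * (\<tau> / 2)\<^sup>2)
          + (1/\<epsilon> + Vm + Am) * (K / \<epsilon> ^ 2 * (\<tau> / 2)\<^sup>2)) \<le> K * (1 + Vm + Am) * (h\<^sup>2 / \<epsilon> + \<tau>\<^sup>2 / \<epsilon> ^ 3)"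
proof -
  have e1: "(1/\<tau>) * (2 * (K / \<epsilon> ^ 3) * (\<tau> / 2) ^ 3) + ((1/\<epsilon>) * (K * h\<^sup>2 + K / \<epsilon> ^ 2 * (\<tau> / 2)\<^sup>2)
          + (1/\<epsilon> + Vm + Am) * (K / \<epsilon> ^ 2 * (\<tau> / 2)\<^sup>2))
        = K * h\<^sup>2 / \<epsilon> + (3/4) * (K * \<tau>\<^sup>2 / \<epsilon> ^ 3) + (Vm + Am) * (K * \<tau>\<^sup>2) * (1 / \<epsilon> ^ 2) / 4"
    using ep tau by (simp add: field_simps power2_eq_square power3_eq_cube)
  have e2: "K * (1 + Vm + Am) * (h\<^sup>2 / \<epsilon> + \<tau>\<^sup>2 / \<epsilon> ^ 3)
        = K * h\<^sup>2 / \<epsilon> + (Vm + Am) * (K * h\<^sup>2 / \<epsilon>) + K * \<tau>\<^sup>2 / \<epsilon> ^ 3 + (Vm + Am) * (K * \<tau>\<^sup>2) * (1 / \<epsilon> ^ 3)"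
    using ep by (simp add: field_simps)
  have p: "1 / \<epsilon> ^ 2 \<le> 1 / \<epsilon> ^ 3"
  proof -
    have "\<epsilon> ^ 3 \<le> \<epsilon> ^ 2" using ep ep1 by (simp add: power_decreasing)
    thus ?thesis using ep by (simp add: frac_le)
  qed
  have q: "(Vm + Am) * (K * \<tau>\<^sup>2) * (1 / \<epsilon> ^ 2) \<le> (Vm + Am) * (K * \<tau>\<^sup>2) * (1 / \<epsilon> ^ 3)"
    by (rule mult_left_mono[OF p]) (use V0 A0 K0 in simp)
  have r: "0 \<le> (Vm + Am) * (K * h\<^sup>2 / \<epsilon>)" using V0 A0 K0 ep by simp
  have s: "0 \<le> K * \<tau>\<^sup>2 / \<epsilon> ^ 3" using K0 ep by simp
  have t: "0 \<le> (Vm + Am) * (K * \<tau>\<^sup>2) * (1 / \<epsilon> ^ 2)" using V0 A0 K0 ep by simp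
  have ab: "\<And>(A::real) r s X Y. X \<le> Y \<Longrightarrow> 0 \<le> X \<Longrightarrow> 0 \<le> r \<Longrightarrow> 0 \<le> s \<Longrightarrow> A + 3/4 * s + X / 4 \<le> A + r + s + Y"
    by linarith
  show ?thesis unfolding e1 e2 by (rule ab[OF q t r s])
qed

lemma trunc:
  fixes D :: "nat \<Rightarrow> nat \<Rightarrow> real \<Rightarrow> real \<Rightarrow> complex^2"
  assumes sol: "dirac_solution a b T K \<epsilon> V A1 D"
    and ab: "a < b" and ep: "0 < \<epsilon>" and ep1: "\<epsilon> \<le> 1" and M: "M > 0" and hdef: "h = (b - a) / real M"
    and tau: "\<tau> > 0" and tn0: "0 \<le> tn" and tnT: "tn + \<tau> \<le> T" and j: "j < M"
    and cV: "continuous_on ({0..T} \<times> {a..b}) (\<lambda>(t,x). V t x)"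
    and cA: "continuous_on ({0..T} \<times> {a..b}) (\<lambda>(t,x). A1 t x)"
    and Vb: "\<bar>V (tn + \<tau>/2) (a + real j * h)\<bar> \<le> Vm" and Ab: "\<bar>A1 (tn + \<tau>/2) (a + real j * h)\<bar> \<le> Am"
    and K0: "K \<ge> 0"
    and Qx: "\<And>k. Qx k = (1/2::complex) *s (D 0 0 (tn + \<tau>) (a + real k * h) + D 0 0 tn (a + real k * h))"
  shows "norm (\<i> *s (complex_of_real (1/\<tau>) *s (D 0 0 (tn + \<tau>) (a + real j * h) - D 0 0 tn (a + real j * h)))
           - dirac_rhs \<epsilon> (V (tn + \<tau>/2) (a + real j * h)) (A1 (tn + \<tau>/2) (a + real j * h))
               (complex_of_real (1/(2*h)) *s (Qx ((j+1) mod M) - Qx ((j+M-1) mod M))) (Qx j))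
         \<le> K * (1 + Vm + Am) * (h\<^sup>2 / \<epsilon> + \<tau>\<^sup>2 / \<epsilon> ^ 3)"
proof -
  have dT: "\<And>r s t x. r + s \<le> 1 \<Longrightarrow> t \<in> {0..T} \<Longrightarrow> x \<in> {a..b} \<Longrightarrow>
        ((\<lambda>t'. D r s t' x) has_vector_derivative D (Suc r) s t x) (at t within {0..T})"
    using sol unfolding dirac_solution_def by auto
  have dX: "\<And>r s t x. r + s \<le> 1 \<Longrightarrow> t \<in> {0..T} \<Longrightarrow> x \<in> {a..b} \<Longrightarrow>
        ((\<lambda>x'. D r s t x') has_vector_derivative D r (Suc s) t x) (at x within {a..b})"
    using sol unfolding dirac_solution_def by auto
  have cont: "\<And>r s. r + s \<le> 2 \<Longrightarrow> continuous_on ({0..T} \<times> {a..b}) (\<lambda>(t,x). D r s t x)"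
    using sol unfolding dirac_solution_def by auto
  have per: "\<And>r s t. r + s \<le> 2 \<Longrightarrow> t \<in> {0..T} \<Longrightarrow> D r s t a = D r s t b"
    using sol unfolding dirac_solution_def by auto
  have bnd: "\<And>r s t x. r + s \<le> 2 \<Longrightarrow> t \<in> {0..T} \<Longrightarrow> x \<in> {a..b} \<Longrightarrow> norm (D r s t x) \<le> K / \<epsilon> ^ r"
    using sol unfolding dirac_solution_def by auto
  have LT: "\<And>r s t t' x. r + s = 2 \<Longrightarrow> t \<in> {0..T} \<Longrightarrow> t' \<in> {0..T} \<Longrightarrow> x \<in> {a..b} \<Longrightarrow>
        norm (D r s t x - D r s t' x) \<le> K / \<epsilon> ^ (Suc r) * \<bar>t - t'\<bar>"
    using sol unfolding dirac_solution_def by auto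
  have LX: "\<And>r s t x x'. r + s = 2 \<Longrightarrow> t \<in> {0..T} \<Longrightarrow> x \<in> {a..b} \<Longrightarrow> x' \<in> {a..b} \<Longrightarrow>
        norm (D r s t x - D r s t x') \<le> K / \<epsilon> ^ r * \<bar>x - x'\<bar>"
    using sol unfolding dirac_solution_def by auto
  have eqn: "\<And>t x. t \<in> {0..T} \<Longrightarrow> x \<in> {a<..<b} \<Longrightarrow>
        \<i> *s D 1 0 t x = dirac_rhs \<epsilon> (V t x) (A1 t x) (D 0 1 t x) (D 0 0 t x)"
    using sol unfolding dirac_solution_def by auto
  define tm where "tm = tn + \<tau>/2"
  define xj where "xj = a + real j * h"
  have h0: "h > 0" using ab M hdef by simp
  have aMh: "a + real M * h = b" using M hdef by simp
  have xjI: "xj \<in> {a..b}"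
  proof -
    have "real j + 1 \<le> real M" using j by simp
    hence "(real j + 1) * h \<le> real M * h" using h0 by (intro mult_right_mono) auto
    thus ?thesis using h0 aMh unfolding xj_def by (auto simp: algebra_simps)
  qed
  have tmI: "tm \<in> {0..T}" and tnI: "tn \<in> {0..T}" and t1I: "tn + \<tau> \<in> {0..T}"
    using tn0 tnT tau unfolding tm_def by auto
  have tmp: "tm + \<tau>/2 = tn + \<tau>" and tmm: "tm - \<tau>/2 = tn" unfolding tm_def by simp_all
  have E: "\<i> *s D 1 0 tm xj = dirac_rhs \<epsilon> (V tm xj) (A1 tm xj) (D 0 1 tm xj) (D 0 0 tm xj)"
    by (rule eq_closed[OF ab tmI xjI ep cont[of 1 0] cont[of 0 1] cont[of 0 0] cV cA eqn]) (use tmI in auto)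
  have d00: "\<And>t. t \<in> {0..T} \<Longrightarrow> ((\<lambda>t'. D 0 0 t' xj) has_vector_derivative D 1 0 t xj) (at t within {0..T})"
    using dT[of 0 0 _ xj] xjI by simp
  have d10: "\<And>t. t \<in> {0..T} \<Longrightarrow> ((\<lambda>t'. D 1 0 t' xj) has_vector_derivative D 2 0 t xj) (at t within {0..T})"
    using dT[of 1 0 _ xj] xjI by (simp add: numeral_2_eq_2)
  have d01: "\<And>t. t \<in> {0..T} \<Longrightarrow> ((\<lambda>t'. D 0 1 t' xj) has_vector_derivative D 1 1 t xj) (at t within {0..T})"
    using dT[of 0 1 _ xj] xjI by simp
  have T1: "norm (D 0 0 (tn + \<tau>) xj - D 0 0 tn xj - \<tau> *\<^sub>R D 1 0 tm xj) \<le> 2 * (K / \<epsilon> ^ 3) * (\<tau> / 2) ^ 3"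
  proof -
    have "norm (D 0 0 (tm + \<tau>/2) xj - D 0 0 (tm - \<tau>/2) xj - (2 * (\<tau>/2)) *\<^sub>R D 1 0 tm xj) \<le> 2 * (K / \<epsilon> ^ 3) * (\<tau> / 2) ^ 3"
    proof (rule centered[of "{0..T}" "\<lambda>t. D 0 0 t xj" "\<lambda>t. D 1 0 t xj" "\<lambda>t. D 2 0 t xj", OF _ d00 d10 _ tmI])
      fix y z assume "y \<in> {0..T}" "z \<in> {0..T}"
      thus "norm (D 2 0 y xj - D 2 0 z xj) \<le> K / \<epsilon> ^ 3 * \<bar>y - z\<bar>" using LT[of 2 0 y z xj] xjI by simp
    qed (use tmp tmm t1I tnI tau K0 ep in auto)
    thus ?thesis unfolding tmp tmm by simp
  qed
  have L10: "norm (D 1 0 y xj - D 1 0 tm xj) \<le> K / \<epsilon> ^ 2 * \<bar>y - tm\<bar>" if "y \<in> {0..T}" for y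
    by (rule mvt_bound[of "{0..T}" "\<lambda>t. D 1 0 t xj" "\<lambda>t. D 2 0 t xj", OF _ d10 _ that tmI])
       (use bnd[of 2 0 _ xj] xjI in auto)
  have T2: "norm ((1/2) *\<^sub>R (D 0 0 (tn + \<tau>) xj + D 0 0 tn xj) - D 0 0 tm xj) \<le> K / \<epsilon> ^ 2 * (\<tau> / 2)\<^sup>2"
  proof -
    have "norm ((1/2) *\<^sub>R (D 0 0 (tm + \<tau>/2) xj + D 0 0 (tm - \<tau>/2) xj) - D 0 0 tm xj) \<le> K / \<epsilon> ^ 2 * (\<tau> / 2)\<^sup>2"
      by (rule average[of "{0..T}" "\<lambda>t. D 0 0 t xj" "\<lambda>t. D 1 0 t xj", OF _ d00 L10 tmI])
         (use tmp tmm t1I tnI K0 ep in auto)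
    thus ?thesis unfolding tmp tmm .
  qed
  have T3: "norm ((1/2) *\<^sub>R (D 0 1 (tn + \<tau>) xj + D 0 1 tn xj) - D 0 1 tm xj) \<le> K / \<epsilon> ^ 2 * (\<tau> / 2)\<^sup>2"
  proof -
    have "norm ((1/2) *\<^sub>R (D 0 1 (tm + \<tau>/2) xj + D 0 1 (tm - \<tau>/2) xj) - D 0 1 tm xj) \<le> K / \<epsilon> ^ 2 * (\<tau> / 2)\<^sup>2"
    proof (rule average[of "{0..T}" "\<lambda>t. D 0 1 t xj" "\<lambda>t. D 1 1 t xj", OF _ d01 _ tmI])
      fix y assume "y \<in> {0..T}"
      thus "norm (D 1 1 y xj - D 1 1 tm xj) \<le> K / \<epsilon> ^ 2 * \<bar>y - tm\<bar>" using LT[of 1 1 y tm xj] xjI tmI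
        by (simp add: numeral_2_eq_2)
    qed (use tmp tmm t1I tnI K0 ep in auto)
    thus ?thesis unfolding tmp tmm .
  qed
  define X where "X k = a + real k * h" for k
  define jp where "jp = (j + 1) mod M"
  define jm where "jm = (j + M - 1) mod M"
  define Xp where "Xp t = D 0 0 t (X jp) - D 0 0 t (X jm) - (2 * h) *\<^sub>R D 0 1 t xj" for t
  have TX: "norm (Xp t) \<le> 2 * K * h ^ 3" if t: "t \<in> {0..T}" for t
  proof -
    have "norm (D 0 0 t (a + real ((j + 1) mod M) * h) - D 0 0 t (a + real ((j + M - 1) mod M) * h) - (2 * h) *\<^sub>R D 0 1 t (a + real j * h)) \<le> 2 * K * h ^ 3"
    proof (rule gridX[OF ab M hdef j, of "D 0 0 t" "D 0 1 t" "D 0 2 t" K])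
      fix y assume y: "y \<in> {a..b}"
      show "(D 0 0 t has_vector_derivative D 0 1 t y) (at y within {a..b})" using dX[of 0 0 t y] t y by simp
      show "(D 0 1 t has_vector_derivative D 0 2 t y) (at y within {a..b})" using dX[of 0 1 t y] t y by (simp add: numeral_2_eq_2)
    next
      fix y z assume "y \<in> {a..b}" "z \<in> {a..b}"
      thus "norm (D 0 2 t y - D 0 2 t z) \<le> K * \<bar>y - z\<bar>" using LX[of 0 2 t y z] t by simp
    qed (use K0 per[of 0 0 t] per[of 0 1 t] per[of 0 2 t] t in auto)
    thus ?thesis unfolding Xp_def X_def jp_def jm_def xj_def .
  qed
  have Qx': "Qx k = (1/2) *\<^sub>R (D 0 0 (tn + \<tau>) (X k) + D 0 0 tn (X k))" for k
    unfolding Qx X_def using ofreal_s[of "1/2"] by (simp add: scaleR_add_right)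
  define del where "del = complex_of_real (1/(2*h)) *s (Qx jp - Qx jm)"
  have del_id: "del - D 0 1 tm xj = (1/(4*h)) *\<^sub>R (Xp (tn + \<tau>) + Xp tn) + ((1/2) *\<^sub>R (D 0 1 (tn + \<tau>) xj + D 0 1 tn xj) - D 0 1 tm xj)"
    unfolding del_def Qx' Xp_def using h0
    by (simp add: vec_eq_iff scaleR_conv_of_real[where 'a=complex] field_simps)
  have del_b: "norm (del - D 0 1 tm xj) \<le> K * h\<^sup>2 + K / \<epsilon> ^ 2 * (\<tau> / 2)\<^sup>2"
  proof -
    have "norm ((1/(4*h)) *\<^sub>R (Xp (tn + \<tau>) + Xp tn)) \<le> (1/(4*h)) * (2 * K * h ^ 3 + 2 * K * h ^ 3)"
    proof -
      have "norm (Xp (tn + \<tau>) + Xp tn) \<le> 2 * K * h ^ 3 + 2 * K * h ^ 3"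
        using norm_triangle_ineq[of "Xp (tn + \<tau>)" "Xp tn"] TX[OF t1I] TX[OF tnI] by simp
      hence "(1/(4*h)) * norm (Xp (tn + \<tau>) + Xp tn) \<le> (1/(4*h)) * (2 * K * h ^ 3 + 2 * K * h ^ 3)"
        using h0 by (intro mult_left_mono) auto
      moreover have "norm ((1/(4*h)) *\<^sub>R (Xp (tn + \<tau>) + Xp tn)) = (1/(4*h)) * norm (Xp (tn + \<tau>) + Xp tn)"
        using h0 by simp
      ultimately show ?thesis by linarith
    qed
    also have "\<dots> = K * h\<^sup>2" using h0 by (simp add: field_simps power2_eq_square power3_eq_cube)
    finally have A: "norm ((1/(4*h)) *\<^sub>R (Xp (tn + \<tau>) + Xp tn)) \<le> K * h\<^sup>2" .
    show ?thesis unfolding del_id using A T3 norm_triangle_ineq[of "(1/(4*h)) *\<^sub>R (Xp (tn + \<tau>) + Xp tn)"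
       "(1/2) *\<^sub>R (D 0 1 (tn + \<tau>) xj + D 0 1 tn xj) - D 0 1 tm xj"] by linarith
  qed
  have Qj: "Qx j - D 0 0 tm xj = (1/2) *\<^sub>R (D 0 0 (tn + \<tau>) xj + D 0 0 tn xj) - D 0 0 tm xj"
    unfolding Qx' X_def xj_def by simp
  have lin: "dirac_rhs \<epsilon> (V tm xj) (A1 tm xj) (del - D 0 1 tm xj) (Qx j - D 0 0 tm xj)
      = dirac_rhs \<epsilon> (V tm xj) (A1 tm xj) del (Qx j) - \<i> *s D 1 0 tm xj"
    unfolding rhs_lin E ..
  have tid: "\<i> *s (complex_of_real (1/\<tau>) *s (D 0 0 (tn + \<tau>) xj - D 0 0 tn xj)) - \<i> *s D 1 0 tm xj
      = \<i> *s ((1/\<tau>) *\<^sub>R (D 0 0 (tn + \<tau>) xj - D 0 0 tn xj - \<tau> *\<^sub>R D 1 0 tm xj))"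
    using tau by (simp add: vec_eq_iff scaleR_conv_of_real[where 'a=complex] field_simps)
  have xid: "\<i> *s (complex_of_real (1/\<tau>) *s (D 0 0 (tn + \<tau>) xj - D 0 0 tn xj)) - dirac_rhs \<epsilon> (V tm xj) (A1 tm xj) del (Qx j)
      = \<i> *s ((1/\<tau>) *\<^sub>R (D 0 0 (tn + \<tau>) xj - D 0 0 tn xj - \<tau> *\<^sub>R D 1 0 tm xj))
        - dirac_rhs \<epsilon> (V tm xj) (A1 tm xj) (del - D 0 1 tm xj) (Qx j - D 0 0 tm xj)"
    unfolding lin tid[symmetric] by simp
  have n1: "norm (\<i> *s ((1/\<tau>) *\<^sub>R (D 0 0 (tn + \<tau>) xj - D 0 0 tn xj - \<tau> *\<^sub>R D 1 0 tm xj)))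
      \<le> (1/\<tau>) * (2 * (K / \<epsilon> ^ 3) * (\<tau> / 2) ^ 3)"
  proof -
    have "norm (\<i> *s ((1/\<tau>) *\<^sub>R (D 0 0 (tn + \<tau>) xj - D 0 0 tn xj - \<tau> *\<^sub>R D 1 0 tm xj)))
        = (1/\<tau>) * norm (D 0 0 (tn + \<tau>) xj - D 0 0 tn xj - \<tau> *\<^sub>R D 1 0 tm xj)"
      using tau by (simp add: norm_smult)
    also have "\<dots> \<le> (1/\<tau>) * (2 * (K / \<epsilon> ^ 3) * (\<tau> / 2) ^ 3)"
      using T1 tau by (intro mult_left_mono) auto
    finally show ?thesis .
  qed
  have n2: "norm (dirac_rhs \<epsilon> (V tm xj) (A1 tm xj) (del - D 0 1 tm xj) (Qx j - D 0 0 tm xj))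
      \<le> (1/\<epsilon>) * (K * h\<^sup>2 + K / \<epsilon> ^ 2 * (\<tau> / 2)\<^sup>2) + (1/\<epsilon> + Vm + Am) * (K / \<epsilon> ^ 2 * (\<tau> / 2)\<^sup>2)"
  proof -
    have "norm (dirac_rhs \<epsilon> (V tm xj) (A1 tm xj) (del - D 0 1 tm xj) (Qx j - D 0 0 tm xj))
        \<le> (1/\<epsilon>) * norm (del - D 0 1 tm xj) + (1/\<epsilon> + \<bar>V tm xj\<bar> + \<bar>A1 tm xj\<bar>) * norm (Qx j - D 0 0 tm xj)"
      by (rule rhs_bound[OF ep])
    also have "\<dots> \<le> (1/\<epsilon>) * (K * h\<^sup>2 + K / \<epsilon> ^ 2 * (\<tau> / 2)\<^sup>2) + (1/\<epsilon> + Vm + Am) * (K / \<epsilon> ^ 2 * (\<tau> / 2)\<^sup>2)"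
    proof (rule add_mono)
      show "(1/\<epsilon>) * norm (del - D 0 1 tm xj) \<le> (1/\<epsilon>) * (K * h\<^sup>2 + K / \<epsilon> ^ 2 * (\<tau> / 2)\<^sup>2)"
        using del_b ep by (intro mult_left_mono) auto
      have v: "\<bar>V tm xj\<bar> \<le> Vm" and w: "\<bar>A1 tm xj\<bar> \<le> Am" using Vb Ab unfolding tm_def xj_def by auto
      show "(1/\<epsilon> + \<bar>V tm xj\<bar> + \<bar>A1 tm xj\<bar>) * norm (Qx j - D 0 0 tm xj) \<le> (1/\<epsilon> + Vm + Am) * (K / \<epsilon> ^ 2 * (\<tau> / 2)\<^sup>2)"
        using v w T2 ep unfolding Qj by (intro mult_mono) auto
    qed
    finally show ?thesis .
  qed
  have fin: "norm (\<i> *s (complex_of_real (1/\<tau>) *s (D 0 0 (tn + \<tau>) xj - D 0 0 tn xj)) - dirac_rhs \<epsilon> (V tm xj) (A1 tm xj) del (Qx j))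
      \<le> K * (1 + Vm + Am) * (h\<^sup>2 / \<epsilon> + \<tau>\<^sup>2 / \<epsilon> ^ 3)"
  proof -
    have V0: "Vm \<ge> 0" using Vb by linarith
    have A0: "Am \<ge> 0" using Ab by linarith
    show ?thesis unfolding xid
      using norm_triangle_ineq4[of "\<i> *s ((1/\<tau>) *\<^sub>R (D 0 0 (tn + \<tau>) xj - D 0 0 tn xj - \<tau> *\<^sub>R D 1 0 tm xj))"
        "dirac_rhs \<epsilon> (V tm xj) (A1 tm xj) (del - D 0 1 tm xj) (Qx j - D 0 0 tm xj)"] n1 n2
        num_final[OF ep ep1 tau K0 V0 A0, of h] by linarith
  qed
  show ?thesis using fin unfolding del_def jp_def jm_def tm_def xj_def .
qed

lemma L2_bound:
  assumes "finite A" and "\<And>j. j \<in> A \<Longrightarrow> \<bar>f j\<bar> \<le> B" and "B \<ge> 0"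
  shows "L2_set f A \<le> sqrt (real (card A)) * B"
proof -
  have "(\<Sum>j\<in>A. (f j)\<^sup>2) \<le> (\<Sum>j\<in>A. B\<^sup>2)"
  proof (rule sum_mono)
    fix j assume "j \<in> A"
    hence "\<bar>f j\<bar> \<le> B" using assms by simp
    hence "\<bar>f j\<bar>\<^sup>2 \<le> B\<^sup>2" by (intro power_mono) auto
    thus "(f j)\<^sup>2 \<le> B\<^sup>2" by simp
  qed
  hence "L2_set f A \<le> sqrt (real (card A) * B\<^sup>2)" unfolding L2_set_def by simp
  also have "\<dots> = sqrt (real (card A)) * B" using assms(3) by (simp add: real_sqrt_mult)
  finally show ?thesis .
qed

lemma grid_l2_eq:
  assumes "h \<ge> 0"
  shows "grid_l2 M h e = sqrt h * L2_set (\<lambda>j. norm (e j)) {..<M}"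
  unfolding grid_l2_def L2_set_def by (simp add: real_sqrt_mult)

lemma bounded_cont:
  fixes V :: "real \<Rightarrow> real \<Rightarrow> real"
  assumes "continuous_on ({0..T} \<times> {a..b}) (\<lambda>(t,x). V t x)"
  obtains Vm where "\<And>t x. t \<in> {0..T} \<Longrightarrow> x \<in> {a..b} \<Longrightarrow> \<bar>V t x\<bar> \<le> Vm"
proof -
  have "compact ((\<lambda>(t,x). V t x) ` ({0..T} \<times> {a..b}))"
    by (rule compact_continuous_image[OF assms]) (simp add: compact_Times)
  then obtain B where B: "\<forall>y \<in> (\<lambda>(t,x). V t x) ` ({0..T} \<times> {a..b}). norm y \<le> B"
    using compact_imp_bounded bounded_iff by metis
  show ?thesis
  proof (rule that)
    fix t x assume "t \<in> {0..T}" "x \<in> {a..b}"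
    hence "(t, x) \<in> {0..T} \<times> {a..b}" by simp
    hence "V t x \<in> (\<lambda>(t,x). V t x) ` ({0..T} \<times> {a..b})" by force
    thus "\<bar>V t x\<bar> \<le> B" using B by auto
  qed
qed

theorem theorem1:
  fixes a b T :: real
    and V A1 :: "real \<Rightarrow> real \<Rightarrow> real"
    and Phi :: "real \<Rightarrow> nat \<Rightarrow> nat \<Rightarrow> real \<Rightarrow> real \<Rightarrow> complex^2"
  assumes "a < b" and "0 < T"
    and "continuous_on ({0..T} \<times> {a..b}) (\<lambda>(t,x). V t x)"
    and "continuous_on ({0..T} \<times> {a..b}) (\<lambda>(t,x). A1 t x)"
    and "\<exists>K. \<forall>\<epsilon>. 0 < \<epsilon> \<and> \<epsilon> \<le> 1 \<longrightarrow> dirac_solution a b T K \<epsilon> V A1 (Phi \<epsilon>)"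
  shows "\<exists>h0 > 0. \<exists>\<tau>0 > 0. \<exists>C > 0. \<forall>\<epsilon> M \<tau> P n.
           0 < \<epsilon> \<and> \<epsilon> \<le> 1 \<and> 0 < M \<and> (b - a) / real M \<le> h0 \<and> 0 < \<tau> \<and> \<tau> \<le> \<tau>0 \<and>
           cnfd_solution a b T \<epsilon> V A1 (Phi \<epsilon> 0 0 0) M \<tau> P \<and> real n * \<tau> \<le> T \<longrightarrow>
           grid_l2 M ((b - a) / real M) (\<lambda>j. Phi \<epsilon> 0 0 (real n * \<tau>) (a + real j * ((b - a) / real M)) - P n j)
             \<le> C * (((b - a) / real M)\<^sup>2 / \<epsilon> + \<tau>\<^sup>2 / \<epsilon> ^ 3)"
proof -
  note ab = assms(1) and T0 = assms(2) and cV = assms(3) and cA = assms(4)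
  obtain K where HK: "\<And>\<epsilon>. 0 < \<epsilon> \<Longrightarrow> \<epsilon> \<le> 1 \<Longrightarrow> dirac_solution a b T K \<epsilon> V A1 (Phi \<epsilon>)"
    using assms(5) by blast
  have K0: "K \<ge> 0"
  proof -
    have "norm (Phi 1 0 0 0 a) \<le> K / 1 ^ 0" using HK[of 1] ab T0 unfolding dirac_solution_def by auto
    thus ?thesis by (metis norm_ge_zero order_trans div_by_1 power_0)
  qed
  obtain Vm where Vm: "\<And>t x. t \<in> {0..T} \<Longrightarrow> x \<in> {a..b} \<Longrightarrow> \<bar>V t x\<bar> \<le> Vm"
    using bounded_cont[OF cV] by blast
  obtain Am where Am: "\<And>t x. t \<in> {0..T} \<Longrightarrow> x \<in> {a..b} \<Longrightarrow> \<bar>A1 t x\<bar> \<le> Am"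
    using bounded_cont[OF cA] by blast
  have Vm0: "Vm \<ge> 0" using Vm[of 0 a] ab T0 by fastforce
  have Am0: "Am \<ge> 0" using Am[of 0 a] ab T0 by fastforce
  define Cx where "Cx = K * (1 + Vm + Am)"
  have Cx0: "Cx \<ge> 0" unfolding Cx_def using K0 Vm0 Am0 by simp
  define C where "C = T * sqrt (b - a) * Cx + 1"
  have "T * sqrt (b - a) * Cx \<ge> 0" using T0 ab Cx0 by simp
  hence C0: "C > 0" unfolding C_def by linarith
  have main: "grid_l2 M ((b - a) / real M) (\<lambda>j. Phi \<epsilon> 0 0 (real n * \<tau>) (a + real j * ((b - a) / real M)) - P n j)
             \<le> C * (((b - a) / real M)\<^sup>2 / \<epsilon> + \<tau>\<^sup>2 / \<epsilon> ^ 3)"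
    if ep: "0 < \<epsilon>" and ep1: "\<epsilon> \<le> 1" and M: "0 < M" and tau: "0 < \<tau>"
      and cn: "cnfd_solution a b T \<epsilon> V A1 (Phi \<epsilon> 0 0 0) M \<tau> P" and nT: "real n * \<tau> \<le> T"
    for \<epsilon> M \<tau> P n
  proof -
    define h where "h = (b - a) / real M"
    have h0: "h > 0" unfolding h_def using ab M by simp
    define D where "D = Phi \<epsilon>"
    have sol: "dirac_solution a b T K \<epsilon> V A1 D" unfolding D_def by (rule HK[OF ep ep1])
    have init: "\<And>j. j < M \<Longrightarrow> P 0 j = D 0 0 0 (a + real j * h)"
      using cn unfolding cnfd_solution_def Let_def h_def D_def by auto
    have stepP: "\<And>k j. real (Suc k) * \<tau> \<le> T \<Longrightarrow> j < M \<Longrightarrow>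
         \<i> *s (complex_of_real (1/\<tau>) *s (P (Suc k) j - P k j)) =
            dirac_rhs \<epsilon> (V (real k * \<tau> + \<tau> / 2) (a + real j * h)) (A1 (real k * \<tau> + \<tau> / 2) (a + real j * h))
              (complex_of_real (1 / (2*h)) *s ((\<lambda>l. (1/2 :: complex) *s (P (Suc k) l + P k l)) ((j + 1) mod M)
                 - (\<lambda>l. (1/2 :: complex) *s (P (Suc k) l + P k l)) ((j + M - 1) mod M)))
              ((\<lambda>l. (1/2 :: complex) *s (P (Suc k) l + P k l)) j)"
      using cn unfolding cnfd_solution_def Let_def h_def by blast
    define ex where "ex k j = D 0 0 (real k * \<tau>) (a + real j * h)" for k j
    define e where "e k j = ex k j - P k j" for k j
    define Qx where "Qx k l = (1/2 :: complex) *s (ex (Suc k) l + ex k l)" for k l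
    define QP where "QP k l = (1/2 :: complex) *s (P (Suc k) l + P k l)" for k l
    define Qe where "Qe k l = (1/2 :: complex) *s (e (Suc k) l + e k l)" for k l
    define xi where "xi k j = \<i> *s (complex_of_real (1/\<tau>) *s (ex (Suc k) j - ex k j))
        - dirac_rhs \<epsilon> (V (real k * \<tau> + \<tau> / 2) (a + real j * h)) (A1 (real k * \<tau> + \<tau> / 2) (a + real j * h))
              (complex_of_real (1 / (2*h)) *s (Qx k ((j + 1) mod M) - Qx k ((j + M - 1) mod M))) (Qx k j)" for k j
    define B where "B = Cx * (h\<^sup>2 / \<epsilon> + \<tau>\<^sup>2 / \<epsilon> ^ 3)"
    have B0: "B \<ge> 0" unfolding B_def using Cx0 ep by simp
    have xib: "norm (xi k j) \<le> B" if kT: "real (Suc k) * \<tau> \<le> T" and j: "j < M" for k j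
    proof -
      have t1: "real (Suc k) * \<tau> = real k * \<tau> + \<tau>" by (simp add: algebra_simps)
      have tn0: "0 \<le> real k * \<tau>" using tau by simp
      have tnT: "real k * \<tau> + \<tau> \<le> T" using kT t1 by simp
      have xjI: "a + real j * h \<in> {a..b}"
      proof -
        have "real j + 1 \<le> real M" using j by simp
        hence "(real j + 1) * h \<le> real M * h" using h0 by (intro mult_right_mono) auto
        moreover have "real M * h = b - a" unfolding h_def using M by simp
        ultimately show ?thesis using h0 by (auto simp: algebra_simps)
      qed
      have tmI: "real k * \<tau> + \<tau> / 2 \<in> {0..T}" using tn0 tnT tau by auto
      have "norm (\<i> *s (complex_of_real (1/\<tau>) *s (D 0 0 (real k * \<tau> + \<tau>) (a + real j * h) - D 0 0 (real k * \<tau>) (a + real j * h)))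
           - dirac_rhs \<epsilon> (V (real k * \<tau> + \<tau>/2) (a + real j * h)) (A1 (real k * \<tau> + \<tau>/2) (a + real j * h))
               (complex_of_real (1/(2*h)) *s (Qx k ((j+1) mod M) - Qx k ((j+M-1) mod M))) (Qx k j))
         \<le> K * (1 + Vm + Am) * (h\<^sup>2 / \<epsilon> + \<tau>\<^sup>2 / \<epsilon> ^ 3)"
        by (rule trunc[OF sol ab ep ep1 M h_def tau tn0 tnT j cV cA Vm[OF tmI xjI] Am[OF tmI xjI] K0])
           (simp add: Qx_def ex_def t1 del: of_nat_Suc)
      thus ?thesis unfolding xi_def B_def Cx_def ex_def t1 .
    qed
    have erreq: "\<i> *s (complex_of_real (1/\<tau>) *s (e (Suc k) j - e k j)) =
        dirac_rhs \<epsilon> (V (real k * \<tau> + \<tau> / 2) (a + real j * h)) (A1 (real k * \<tau> + \<tau> / 2) (a + real j * h))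
          (complex_of_real (1/(2*h)) *s (Qe k ((j+1) mod M) - Qe k ((j+M-1) mod M))) (Qe k j) + xi k j"
      if kT: "real (Suc k) * \<tau> \<le> T" and j: "j < M" for k j
    proof -
      let ?v = "V (real k * \<tau> + \<tau> / 2) (a + real j * h)" and ?w = "A1 (real k * \<tau> + \<tau> / 2) (a + real j * h)"
      let ?c = "complex_of_real (1/(2*h))"
      have sP: "\<i> *s (complex_of_real (1/\<tau>) *s (P (Suc k) j - P k j)) =
          dirac_rhs \<epsilon> ?v ?w (?c *s (QP k ((j + 1) mod M) - QP k ((j + M - 1) mod M))) (QP k j)"
        using stepP[OF kT j] unfolding QP_def by simp
      have sX: "\<i> *s (complex_of_real (1/\<tau>) *s (ex (Suc k) j - ex k j)) =
          dirac_rhs \<epsilon> ?v ?w (?c *s (Qx k ((j + 1) mod M) - Qx k ((j + M - 1) mod M))) (Qx k j) + xi k j"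
        unfolding xi_def by simp
      have l1: "\<i> *s (complex_of_real (1/\<tau>) *s (e (Suc k) j - e k j)) =
          \<i> *s (complex_of_real (1/\<tau>) *s (ex (Suc k) j - ex k j)) - \<i> *s (complex_of_real (1/\<tau>) *s (P (Suc k) j - P k j))"
        unfolding e_def by (simp add: vec_eq_iff algebra_simps)
      have l2: "?c *s (Qe k ((j+1) mod M) - Qe k ((j+M-1) mod M)) =
          ?c *s (Qx k ((j + 1) mod M) - Qx k ((j + M - 1) mod M)) - ?c *s (QP k ((j + 1) mod M) - QP k ((j + M - 1) mod M))"
        unfolding Qe_def Qx_def QP_def e_def by (simp add: vec_eq_iff algebra_simps)
      have l3: "Qe k j = Qx k j - QP k j"
        unfolding Qe_def Qx_def QP_def e_def by (simp add: vec_eq_iff algebra_simps)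
      show ?thesis unfolding l1 l2 l3 sP sX rhs_lin by simp
    qed
    have en: "L2_set (\<lambda>j. norm (e (Suc k) j)) {..<M} \<le> L2_set (\<lambda>j. norm (e k j)) {..<M} + \<tau> * (sqrt (real M) * B)"
      if kT: "real (Suc k) * \<tau> \<le> T" for k
    proof -
      have Qeq: "\<And>l. Qe k l = (1/2::complex) *s (e (Suc k) l + e k l)" by (simp add: Qe_def)
      have eqs: "\<And>j. j < M \<Longrightarrow> \<i> *s (complex_of_real (1/\<tau>) *s (e (Suc k) j - e k j)) =
          dirac_rhs \<epsilon> ((\<lambda>j. V (real k * \<tau> + \<tau> / 2) (a + real j * h)) j) ((\<lambda>j. A1 (real k * \<tau> + \<tau> / 2) (a + real j * h)) j)
            (complex_of_real (1/(2*h)) *s (Qe k ((j+1) mod M) - Qe k ((j+M-1) mod M))) (Qe k j) + xi k j"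
        using erreq[OF kT] by simp
      have "L2_set (\<lambda>j. norm (e (Suc k) j)) {..<M} \<le> L2_set (\<lambda>j. norm (e k j)) {..<M} + \<tau> * L2_set (\<lambda>j. norm (xi k j)) {..<M}"
        by (rule energy[OF M h0 tau ep Qeq eqs])
      moreover have "L2_set (\<lambda>j. norm (xi k j)) {..<M} \<le> sqrt (real (card {..<M})) * B"
        by (rule L2_bound) (use xib[OF kT] B0 in auto)
      ultimately show ?thesis using tau by (simp add: mult_left_mono order_trans)
    qed
    have ind: "real k * \<tau> \<le> T \<Longrightarrow> L2_set (\<lambda>j. norm (e k j)) {..<M} \<le> real k * \<tau> * (sqrt (real M) * B)" for k
    proof (induction k)
      case 0
      have "L2_set (\<lambda>j. norm (e 0 j)) {..<M} = L2_set (\<lambda>j. 0) {..<M}"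
        by (rule L2_set_cong) (auto simp: e_def ex_def init)
      thus ?case by (simp add: L2_set_def)
    next
      case (Suc k)
      have "real k * \<tau> \<le> real (Suc k) * \<tau>" using tau by (simp add: mult_right_mono)
      hence "real k * \<tau> \<le> T" using Suc.prems by linarith
      hence IH: "L2_set (\<lambda>j. norm (e k j)) {..<M} \<le> real k * \<tau> * (sqrt (real M) * B)" by (rule Suc.IH)
      have "L2_set (\<lambda>j. norm (e (Suc k) j)) {..<M} \<le> real k * \<tau> * (sqrt (real M) * B) + \<tau> * (sqrt (real M) * B)"
        using en[OF Suc.prems] IH by linarith
      thus ?case by (simp add: algebra_simps)
    qed
    have "grid_l2 M h (e n) = sqrt h * L2_set (\<lambda>j. norm (e n j)) {..<M}"
      by (rule grid_l2_eq) (use h0 in simp)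
    also have "\<dots> \<le> sqrt h * (real n * \<tau> * (sqrt (real M) * B))"
      by (rule mult_left_mono[OF ind[OF nT]]) (use h0 in simp)
    also have "\<dots> \<le> sqrt h * (T * (sqrt (real M) * B))"
      by (rule mult_left_mono[OF mult_right_mono[OF nT]]) (use B0 h0 in simp_all)
    also have "\<dots> = T * sqrt (h * real M) * B" by (simp add: real_sqrt_mult)
    also have "h * real M = b - a" unfolding h_def using M by simp
    also have "T * sqrt (b - a) * B \<le> C * (h\<^sup>2 / \<epsilon> + \<tau>\<^sup>2 / \<epsilon> ^ 3)"
    proof -
      have nn: "h\<^sup>2 / \<epsilon> + \<tau>\<^sup>2 / \<epsilon> ^ 3 \<ge> 0" using ep by simp
      have "T * sqrt (b - a) * B = (T * sqrt (b - a) * Cx) * (h\<^sup>2 / \<epsilon> + \<tau>\<^sup>2 / \<epsilon> ^ 3)" unfolding B_def by simp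
      also have "\<dots> \<le> C * (h\<^sup>2 / \<epsilon> + \<tau>\<^sup>2 / \<epsilon> ^ 3)" unfolding C_def by (rule mult_right_mono[OF _ nn]) simp
      finally show ?thesis .
    qed
    finally show ?thesis unfolding h_def e_def ex_def D_def .
  qed
  show ?thesis
    by (rule exI[of _ 1], simp, rule exI[of _ 1], simp, rule exI[of _ C], use C0 main in auto)
qed

end
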